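(* Let $\mathcal{P}$ be a data distribution on $\mathcal{X}\times[C]$, $D_T$ a fixed test set, and $z_i$ a consistently helpful or consistently harmful training point (as defined in the context). For $k\in\{0,\dots,n-1\}$ let $\tau_k=\mathbb{E}_{D_N\sim\mathcal{P}^{n-1}|z_i}[\Delta^{D_N}_{z_i}(k,D_T)]$ and $\delta_k=\mathrm{Var}_{D_N\sim\mathcal{P}^{n-1}|z_i}(\Delta^{D_N}_{z_i}(k,D_T))$, where $D_N\sim\mathcal{P}^{n-1}|z_i$ means $D_N$ consists of $z_i$ and $n-1$ further points drawn i.i.d. from $\mathcal{P}$. Assume $n^{-1}\sum_{k=0}^{n-1}\delta_k\le\delta_{n-1}$ and $|\tau_0|\ge|\tau_1|\ge\dots\ge|\tau_{n-1}|$. Then $$\frac{n^{-1}\sum_{k=0}^{n-1}\delta_k}{\left(n^{-1}\sum_{k=0}^{n-1}\tau_k\right)^2}\le\frac{\delta_{n-1}}{\tau_{n-1}^2}.$$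
   Context: For $S\subseteq N=\{1,\dots,n\}$, $f_S$ is the classifier obtained by training (by a fixed procedure) on $\{z_j:j\in S\}\subseteq D_N$, and $U(S,D_T)=\frac{1}{|D_T|}\sum_{(x_t,y_t)\in D_T}\mathbf{1}[f_S(x_t)=y_t]$. The marginal contribution of $z_i$ to subsets of size $k$ is $\Delta^{D_N}_{z_i}(k,D_T)=\binom{n-1}{k}^{-1}\sum_{S\subseteq N\setminus\{i\},\,|S|=k}\big(U(S\cup\{i\},D_T)-U(S,D_T)\big)$. The point $z_i$ is consistently helpful if $\tau_k\ge0$ for all $k\in\{0,\dots,n-1\}$ and consistently harmful if $\tau_k<0$ for all such $k$. *)

theory Defs
  imports "HOL-Probability.Probability"
begin

text \<open>The training data set D_N is indexed by
  positions {0..<n} (the paper's N = {1..n}, shifted by one), given as a function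
  D :: nat => 'x * 'y. A fixed training procedure maps a list of training points
  to a classifier; f_S is obtained by training on the points with index in S
  (listed in increasing index order).\<close>

definition classifier_of ::
  "(('x \<times> 'y) list \<Rightarrow> 'x \<Rightarrow> 'y) \<Rightarrow> (nat \<Rightarrow> 'x \<times> 'y) \<Rightarrow> nat set \<Rightarrow> 'x \<Rightarrow> 'y" where
  "classifier_of train D S = train (map D (sorted_list_of_set S))"

text \<open>Utility: test accuracy of f_S on the test set D_T (a list, i.e. a multiset of points).\<close>
definition utility ::
  "(('x \<times> 'y) list \<Rightarrow> 'x \<Rightarrow> 'y) \<Rightarrow> ('x \<times> 'y) list \<Rightarrow> (nat \<Rightarrow> 'x \<times> 'y) \<Rightarrow> nat set \<Rightarrow> real" where
  "utility train DT D S =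
     (\<Sum>t\<leftarrow>DT. if classifier_of train D S (fst t) = snd t then 1 else 0) / real (length DT)"

definition marg_contrib ::
  "(('x \<times> 'y) list \<Rightarrow> 'x \<Rightarrow> 'y) \<Rightarrow> ('x \<times> 'y) list \<Rightarrow> nat \<Rightarrow> (nat \<Rightarrow> 'x \<times> 'y) \<Rightarrow> nat \<Rightarrow> nat \<Rightarrow> real" where
  "marg_contrib train DT n D i k =
     (\<Sum>S\<in>{S. S \<subseteq> {0..<n} - {i} \<and> card S = k}.
        utility train DT D (insert i S) - utility train DT D S) / real ((n - 1) choose k)"

text \<open>Distribution of D_N conditioned on z_i: position i holds z_i, the other n-1
  positions are i.i.d. samples from P.\<close>
definition others_dist :: "('x \<times> 'y) measure \<Rightarrow> nat \<Rightarrow> nat \<Rightarrow> (nat \<Rightarrow> 'x \<times> 'y) measure" where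
  "others_dist P n i = PiM ({0..<n} - {i}) (\<lambda>_. P)"

definition tau_k ::
  "('x \<times> 'y) measure \<Rightarrow> (('x \<times> 'y) list \<Rightarrow> 'x \<Rightarrow> 'y) \<Rightarrow> ('x \<times> 'y) list \<Rightarrow> nat \<Rightarrow> nat \<Rightarrow> ('x \<times> 'y) \<Rightarrow> nat \<Rightarrow> real" where
  "tau_k P train DT n i zi k =
     prob_space.expectation (others_dist P n i) (\<lambda>w. marg_contrib train DT n (w(i := zi)) i k)"

definition delta_k ::
  "('x \<times> 'y) measure \<Rightarrow> (('x \<times> 'y) list \<Rightarrow> 'x \<Rightarrow> 'y) \<Rightarrow> ('x \<times> 'y) list \<Rightarrow> nat \<Rightarrow> nat \<Rightarrow> ('x \<times> 'y) \<Rightarrow> nat \<Rightarrow> real" where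
  "delta_k P train DT n i zi k =
     prob_space.variance (others_dist P n i) (\<lambda>w. marg_contrib train DT n (w(i := zi)) i k)"

end

theory Submission
  imports Defs
begin

lemma delta_nonneg: "delta_k P train DT n i zi k \<ge> 0"
  unfolding delta_k_def by (rule integral_nonneg_AE) auto

lemma abs_ge_last:
  fixes t :: "nat \<Rightarrow> real"
  assumes "\<forall>k. k + 1 < n \<longrightarrow> \<bar>t (k + 1)\<bar> \<le> \<bar>t k\<bar>" "k < n"
  shows "\<bar>t (n - 1)\<bar> \<le> \<bar>t k\<bar>"
  using assms(2)
proof (induction "n - 1 - k" arbitrary: k)
  case 0 then have "k = n - 1" by simp
  then show ?case by simp
next
  case (Suc m)
  then have "k + 1 < n" by simp
  have "\<bar>t (n - 1)\<bar> \<le> \<bar>t (k+1)\<bar>" using Suc.hyps(1)[of "k+1"] Suc.hyps(2) \<open>k+1<n\<close> by simp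
  then show ?case using assms(1) \<open>k+1<n\<close> by force
qed

lemma abstract:
  fixes t d :: "nat \<Rightarrow> real"
  assumes n: "0 < n"
    and cons: "(\<forall>k<n. t k \<ge> 0) \<or> (\<forall>k<n. t k < 0)"
    and vm: "(\<Sum>k<n. d k) / real n \<le> d (n - 1)"
    and dec: "\<forall>k. k + 1 < n \<longrightarrow> \<bar>t (k + 1)\<bar> \<le> \<bar>t k\<bar>"
    and nz: "t (n - 1) \<noteq> 0"
    and dn: "\<forall>k. d k \<ge> 0"
  shows "((\<Sum>k<n. d k) / real n) / ((\<Sum>k<n. t k) / real n)\<^sup>2 \<le> d (n - 1) / (t (n - 1))\<^sup>2"
proof -
  have ge: "\<bar>t (n - 1)\<bar> \<le> \<bar>t k\<bar>" if "k < n" for k using abs_ge_last[OF dec that] .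
  have absum: "\<bar>\<Sum>k<n. t k\<bar> = (\<Sum>k<n. \<bar>t k\<bar>)"
    using cons
  proof
    assume h: "\<forall>k<n. t k \<ge> 0"
    then have "(\<Sum>k<n. t k) \<ge> 0" by (intro sum_nonneg) simp
    then show ?thesis using h by simp
  next
    assume h: "\<forall>k<n. t k < 0"
    then have "(\<Sum>k<n. t k) \<le> 0" by (intro sum_nonpos) (simp add: less_imp_le)
    then have "\<bar>\<Sum>k<n. t k\<bar> = - (\<Sum>k<n. t k)" by simp
    also have "\<dots> = (\<Sum>k<n. \<bar>t k\<bar>)" unfolding sum_negf[symmetric]
      by (rule sum.cong) (use h in auto)
    finally show ?thesis .
  qed
  have "(\<Sum>k<n. \<bar>t (n - 1)\<bar>) \<le> (\<Sum>k<n. \<bar>t k\<bar>)" by (rule sum_mono) (use ge in auto)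
  then have "real n * \<bar>t (n - 1)\<bar> \<le> \<bar>\<Sum>k<n. t k\<bar>" using absum by simp
  then have m: "\<bar>t (n - 1)\<bar> \<le> \<bar>(\<Sum>k<n. t k) / real n\<bar>" using n
    by (simp add: field_simps)
  have tpos: "0 < \<bar>t (n - 1)\<bar>" using nz by simp
  have sq: "(t (n - 1))\<^sup>2 \<le> ((\<Sum>k<n. t k) / real n)\<^sup>2"
    using m tpos by (metis abs_le_square_iff less_imp_le)
  have tp2: "0 < (t (n - 1))\<^sup>2" using nz by simp
  have A0: "0 \<le> (\<Sum>k<n. d k) / real n" using dn by (simp add: sum_nonneg)
  have "((\<Sum>k<n. d k) / real n) / ((\<Sum>k<n. t k) / real n)\<^sup>2 \<le> ((\<Sum>k<n. d k) / real n) / (t (n - 1))\<^sup>2"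
    by (rule divide_left_mono[OF sq A0]) (use tp2 sq n in \<open>auto intro!: mult_pos_pos\<close>)
  also have "\<dots> \<le> d (n - 1) / (t (n - 1))\<^sup>2"
    by (rule divide_right_mono[OF vm]) simp
  finally show ?thesis .
qed

theorem corollary3p5:
  fixes P :: "('x \<times> 'y) measure"
    and train :: "('x \<times> 'y) list \<Rightarrow> 'x \<Rightarrow> 'y"
    and DT :: "('x \<times> 'y) list"
    and n i :: nat and zi :: "'x \<times> 'y"
  assumes "prob_space P"
    and "i < n"
    and "zi \<in> space P"
    and consistent: "(\<forall>k<n. tau_k P train DT n i zi k \<ge> 0) \<or> (\<forall>k<n. tau_k P train DT n i zi k < 0)"
    and var_mean: "(\<Sum>k<n. delta_k P train DT n i zi k) / real n \<le> delta_k P train DT n i zi (n - 1)"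
    and abs_decr: "\<forall>k. k + 1 < n \<longrightarrow> \<bar>tau_k P train DT n i zi (k + 1)\<bar> \<le> \<bar>tau_k P train DT n i zi k\<bar>"
    and "tau_k P train DT n i zi (n - 1) \<noteq> 0"
  shows "((\<Sum>k<n. delta_k P train DT n i zi k) / real n) / ((\<Sum>k<n. tau_k P train DT n i zi k) / real n)\<^sup>2
           \<le> delta_k P train DT n i zi (n - 1) / (tau_k P train DT n i zi (n - 1))\<^sup>2"
  by (rule abstract[OF _ consistent var_mean abs_decr assms(7)])
     (use assms(2) in \<open>auto intro: delta_nonneg[of P train DT n i zi]\<close>)

end
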